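(* Let $\mathcal{M}$ be an $\epsilon$-differentially private mechanism on datasets with $n$ rows. Let $T = T_{A_k}\circ\cdots\circ T_{A_1}$ be a sequence of imputation transformations, one for each attribute $A_1,\ldots,A_k$, where each $T_{A_j}$ replaces all missing entries of attribute $A_j$ by a value computed from its input dataset and leaves all other entries unchanged. Then the composite mechanism $\mathcal{M}\circ T$ is $n\epsilon$-differentially private on incomplete datasets with $n$ rows.
   Context: A randomized mechanism $\mathcal{M}$ is $(\epsilon,\delta)$-DP if for all neighbouring datasets $D,D'$ (same number of rows, differing in exactly one row) and all measurable output sets $Z$, $\Pr[\mathcal{M}(D)\in Z]\le e^{\epsilon}\Pr[\mathcal{M}(D')\in Z]+\delta$; $\epsilon$-DP means $(\epsilon,0)$-DP. Datasets may contain missing cells. *)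

theory Defs
  imports "HOL-Probability.Probability"
begin

text \<open>A row assigns to each attribute an optional value (None = missing cell).
  A dataset is a list of rows.\<close>
type_synonym ('a, 'v) row = "'a \<Rightarrow> 'v option"
type_synonym ('a, 'v) dataset = "('a, 'v) row list"

definition neighbours :: "('a, 'v) dataset \<Rightarrow> ('a, 'v) dataset \<Rightarrow> bool" where
  "neighbours D D' \<longleftrightarrow> length D = length D' \<and>
     card {i. i < length D \<and> D ! i \<noteq> D' ! i} = 1"

definition dp :: "'z measure \<Rightarrow> ('a, 'v) dataset set \<Rightarrow> (('a, 'v) dataset \<Rightarrow> 'z measure)
                  \<Rightarrow> real \<Rightarrow> real \<Rightarrow> bool" where
  "dp S Dom M eps delta \<longleftrightarrow>
     (\<forall>D\<in>Dom. prob_space (M D) \<and> sets (M D) = sets S) \<and>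
     (\<forall>D\<in>Dom. \<forall>D'\<in>Dom. neighbours D D' \<longrightarrow>
        (\<forall>Z\<in>sets S. measure (M D) Z \<le> exp eps * measure (M D') Z + delta))"

definition pure_dp :: "'z measure \<Rightarrow> ('a, 'v) dataset set \<Rightarrow> (('a, 'v) dataset \<Rightarrow> 'z measure)
                  \<Rightarrow> real \<Rightarrow> bool" where
  "pure_dp S Dom M eps \<longleftrightarrow> dp S Dom M eps 0"

definition datasets_n :: "nat \<Rightarrow> ('a, 'v) dataset set" where
  "datasets_n n = {D. length D = n}"

definition is_imputation :: "'a \<Rightarrow> (('a, 'v) dataset \<Rightarrow> ('a, 'v) dataset) \<Rightarrow> bool" where
  "is_imputation A T \<longleftrightarrow> (\<exists>f :: ('a, 'v) dataset \<Rightarrow> 'v.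
     \<forall>D. T D = map (\<lambda>r. if r A = None then r(A := Some (f D)) else r) D)"

text \<open>compose [T1,...,Tk] = Tk o ... o T1\<close>
definition compose :: "('b \<Rightarrow> 'b) list \<Rightarrow> 'b \<Rightarrow> 'b" where
  "compose Ts D = fold (\<lambda>T X. T X) Ts D"

end

theory Submission
  imports Defs
begin

lemma imp_len: "is_imputation A T \<Longrightarrow> length (T D) = length D"
  unfolding is_imputation_def by auto

lemma compose_len: "list_all2 is_imputation As Ts \<Longrightarrow> length (compose Ts D) = length D"
proof (induction As Ts arbitrary: D rule: list_all2_induct)
  case Nil then show ?case by (simp add: compose_def)
next
  case (Cons A As T Ts)
  have "compose (T # Ts) D = compose Ts (T D)" by (simp add: compose_def)
  then show ?case using Cons imp_len by metis
qed

lemma group_priv: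
  assumes dp: "pure_dp S (datasets_n n) M eps" and e: "eps \<ge> 0"
  shows "\<And>D D'. length D = n \<Longrightarrow> length D' = n \<Longrightarrow>
     card {i. i < n \<and> D ! i \<noteq> D' ! i} = k \<Longrightarrow> Z \<in> sets S \<Longrightarrow>
     measure (M D) Z \<le> exp (real k * eps) * measure (M D') Z"
proof (induction k)
  case 0
  have "finite {i. i < n \<and> D ! i \<noteq> D' ! i}" by simp
  with 0 have "\<forall>i<n. D ! i = D' ! i" by auto
  with 0 have "D = D'" by (metis nth_equalityI)
  then show ?case by simp
next
  case (Suc m)
  let ?X = "{i. i < n \<and> D ! i \<noteq> D' ! i}"
  have "?X \<noteq> {}" using Suc.prems(3) by (metis card.empty Zero_not_Suc)
  then obtain i where i: "i < n" "D ! i \<noteq> D' ! i" by auto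
  define D1 where "D1 = D[i := D' ! i]"
  have l1: "length D1 = n" using Suc.prems by (simp add: D1_def)
  have "{j. j < length D \<and> D ! j \<noteq> D1 ! j} = {i}"
    using i Suc.prems by (auto simp: D1_def nth_list_update)
  hence nb: "neighbours D D1" using l1 Suc.prems by (simp add: neighbours_def)
  have "{j. j < n \<and> D1 ! j \<noteq> D' ! j} = ?X - {i}"
    using i Suc.prems by (auto simp: D1_def nth_list_update)
  hence c: "card {j. j < n \<and> D1 ! j \<noteq> D' ! j} = m"
    using Suc.prems(3) i by simp
  have IH: "measure (M D1) Z \<le> exp (real m * eps) * measure (M D') Z"
    using Suc.IH[OF l1 Suc.prems(2) c Suc.prems(4)] .
  have "measure (M D) Z \<le> exp eps * measure (M D1) Z + 0"
    using dp nb Suc.prems l1 unfolding pure_dp_def dp_def datasets_n_def by blast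
  also have "\<dots> \<le> exp eps * (exp (real m * eps) * measure (M D') Z)"
    using IH by simp
  also have "\<dots> = exp (real (Suc m) * eps) * measure (M D') Z"
    by (simp add: distrib_right mult_exp_exp[symmetric] algebra_simps)
  finally show ?case .
qed

theorem theorem2:
  fixes S :: "'z measure"
    and M :: "('a::finite, 'v) dataset \<Rightarrow> 'z measure"
    and As :: "'a list"
    and Ts :: "(('a, 'v) dataset \<Rightarrow> ('a, 'v) dataset) list"
    and n :: nat and eps :: real
  assumes "pure_dp S (datasets_n n) M eps"
    and "distinct As" and "set As = UNIV"
    and "list_all2 is_imputation As Ts"
  shows "pure_dp S (datasets_n n) (M \<circ> compose Ts) (real n * eps)"
proof -
  have len: "\<And>D. length (compose Ts D) = length D" using compose_len assms(4) by blast
  have dp: "\<forall>D\<in>datasets_n n. prob_space (M D) \<and> sets (M D) = sets S"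
    and dp2: "\<forall>D\<in>datasets_n n. \<forall>D'\<in>datasets_n n. neighbours D D' \<longrightarrow>
        (\<forall>Z\<in>sets S. measure (M D) Z \<le> exp eps * measure (M D') Z + 0)"
    using assms(1) unfolding pure_dp_def dp_def by auto
  have A: "\<forall>D\<in>datasets_n n. prob_space ((M \<circ> compose Ts) D) \<and> sets ((M \<circ> compose Ts) D) = sets S"
    using dp len by (simp add: datasets_n_def)
  have B: "measure ((M \<circ> compose Ts) D) Z \<le> exp (real n * eps) * measure ((M \<circ> compose Ts) D') Z + 0"
    if D: "D \<in> datasets_n n" and D': "D' \<in> datasets_n n" and nb: "neighbours D D'"
      and Z: "Z \<in> sets S" for D D' Z
  proof -
    have sp: "space S \<in> sets S" by simp
    have "measure (M D) (space S) \<le> exp eps * measure (M D') (space S) + 0"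
      using dp2 D D' nb sp by blast
    moreover have "measure (M D) (space S) = 1" "measure (M D') (space S) = 1"
      using dp D D' by (metis prob_space.prob_space sets_eq_imp_space_eq)+
    ultimately have "1 \<le> exp eps" by simp
    hence e: "eps \<ge> 0" by (metis exp_zero exp_le_cancel_iff)
    let ?E = "compose Ts D" and ?E' = "compose Ts D'"
    have l: "length ?E = n" "length ?E' = n" using D D' len by (auto simp: datasets_n_def)
    have "measure (M ?E) Z \<le> exp (real (card {i. i < n \<and> ?E ! i \<noteq> ?E' ! i}) * eps) * measure (M ?E') Z"
      using group_priv[OF assms(1) e l refl Z] .
    also have "\<dots> \<le> exp (real n * eps) * measure (M ?E') Z"
    proof (rule mult_right_mono)
      have "card {i. i < n \<and> ?E ! i \<noteq> ?E' ! i} \<le> card {..<n}"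
        by (rule card_mono) auto
      thus "exp (real (card {i. i < n \<and> ?E ! i \<noteq> ?E' ! i}) * eps) \<le> exp (real n * eps)"
        using e by (simp add: mult_right_mono)
    qed simp
    finally show ?thesis by simp
  qed
  show ?thesis unfolding pure_dp_def dp_def using A B by blast
qed

end
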